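(* Let $P \subset \mathbb{R}^d$ be a finite point set and let $\mathcal{Q}:\mathbb{R}^d \to P$ be any map. Define the witness-based distance function $\widetilde{d}_{\mathcal{Q}}(x) = \|x - \mathcal{Q}(x)\|$. If there exists at least one point $x \in \mathbb{R}^d$ with $\widetilde{d}_{\mathcal{Q}}(x) \neq d_P(x)$, then $\widetilde{d}_{\mathcal{Q}}$ cannot simultaneously be continuous on $\mathbb{R}^d$ and satisfy a finite relative error bound, i.e. there is no pair of properties "$\widetilde{d}_{\mathcal{Q}}$ is continuous" and "there is a constant $c>0$ with $|\widetilde{d}_{\mathcal{Q}}(y) - d_P(y)| \leq c\, d_P(y)$ for all $y \in \mathbb{R}^d$" holding at the same time.
   Context: $\|\cdot\|$ is the Euclidean norm and $d_P(x) = \min_{p \in P} \|x - p\|$ is the distance from $x$ to $P$. A function of the form $\widetilde{d}_{\mathcal{Q}}(x) = \|x - \mathcal{Q}(x)\|$, where $\mathcal{Q}$ assigns to each query point a "witness" point of $P$, is called witness-based; note $\widetilde{d}_{\mathcal{Q}} \geq d_P$ always. The relative error of $\widetilde{d}_{\mathcal{Q}}$ at $y$ is $(\widetilde{d}_{\mathcal{Q}}(y)-d_P(y))/d_P(y)$. *)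

theory Defs
  imports "HOL-Analysis.Analysis"
begin

definition distP :: "'a::euclidean_space set \<Rightarrow> 'a \<Rightarrow> real" where
  "distP P x = Min ((\<lambda>p. norm (x - p)) ` P)"

definition witness_dist :: "('a::euclidean_space \<Rightarrow> 'a) \<Rightarrow> 'a \<Rightarrow> real" where
  "witness_dist Q x = norm (x - Q x)"

end

theory Submission
  imports Defs
begin

lemma cont_Min_fam:
  fixes f :: "'b \<Rightarrow> 'a::topological_space \<Rightarrow> real"
  assumes "finite A" "A \<noteq> {}" "\<And>p. p \<in> A \<Longrightarrow> continuous_on S (f p)"
  shows "continuous_on S (\<lambda>x. Min ((\<lambda>p. f p x) ` A))"
  using assms
proof (induction A rule: finite_ne_induct)
  case (singleton x)
  then show ?case by simp
next
  case (insert x F)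
  have e: "(\<lambda>z. Min ((\<lambda>p. f p z) ` insert x F)) = (\<lambda>z. min (f x z) (Min ((\<lambda>p. f p z) ` F)))"
    using insert by (auto simp: Min_insert)
  show ?case unfolding e
    by (intro continuous_on_min) (use insert in auto)
qed

lemma nsq: "(norm (u + v))\<^sup>2 = (norm u)\<^sup>2 + 2 * inner u v + (norm (v::'a::real_inner))\<^sup>2"
  by (simp add: power2_norm_eq_inner inner_add_left inner_add_right inner_commute)

lemma strict_near:
  fixes x a q :: "'a::euclidean_space"
  assumes "norm (x - a) \<le> norm (x - q)" "q \<noteq> a" "0 \<le> t" "t < 1"
  shows "norm (a + t *\<^sub>R (x - a) - a) < norm (a + t *\<^sub>R (x - a) - q)"
proof -
  have h: "(norm (x - a))\<^sup>2 \<le> (norm (x - q))\<^sup>2" using assms(1) by (simp add: power_mono)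
  have xq: "x - q = (x - a) + (a - q)" by simp
  have "(norm ((x - a) + (a - q)))\<^sup>2 = (norm (x-a))\<^sup>2 + 2 * inner (x-a) (a-q) + (norm (a-q))\<^sup>2"
    by (rule nsq)
  then have "(norm (x - q))\<^sup>2 = (norm (x-a))\<^sup>2 + 2 * inner (x-a) (a-q) + (norm (a-q))\<^sup>2" by (simp only: xq)
  with h have k: "2 * inner (x-a) (a-q) \<ge> - (norm (a-q))\<^sup>2" by linarith
  have yq: "a + t *\<^sub>R (x - a) - q = t *\<^sub>R (x - a) + (a - q)" by simp
  have "(norm (t *\<^sub>R (x - a) + (a - q)))\<^sup>2 = (norm (t *\<^sub>R (x - a)))\<^sup>2 + 2 * t * inner (x-a) (a-q) + (norm (a-q))\<^sup>2"
    using nsq[of "t *\<^sub>R (x - a)" "a - q"] by simp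
  then have e2: "(norm (a + t *\<^sub>R (x - a) - q))\<^sup>2 = (norm (t *\<^sub>R (x - a)))\<^sup>2 + 2 * t * inner (x-a) (a-q) + (norm (a-q))\<^sup>2"
    by (simp only: yq)
  moreover have "2 * t * inner (x-a) (a-q) \<ge> - t * (norm (a-q))\<^sup>2"
    using mult_left_mono[OF k assms(3)] by simp
  moreover have "(norm (a-q))\<^sup>2 > 0" using assms(2) by simp
  moreover have "(1 - t) * (norm (a-q))\<^sup>2 > 0" using assms(4) calculation(3) by simp
  moreover have "(norm (a + t *\<^sub>R (x - a) - a))\<^sup>2 = (norm (t *\<^sub>R (x - a)))\<^sup>2" by simp
  moreover have "(1 - t) * (norm (a-q))\<^sup>2 = (norm (a-q))\<^sup>2 - t * (norm (a-q))\<^sup>2" by (simp add: algebra_simps)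
  ultimately have "(norm (a + t *\<^sub>R (x - a) - a))\<^sup>2 < (norm (a + t *\<^sub>R (x - a) - q))\<^sup>2"
    by linarith
  then show ?thesis by (rule power2_less_imp_less) simp
qed

theorem lemma1:
  fixes P :: "'a::euclidean_space set" and Q :: "'a \<Rightarrow> 'a"
  assumes "finite P"
    and "\<forall>x. Q x \<in> P"
    and "\<exists>x. witness_dist Q x \<noteq> distP P x"
  shows "\<not> (continuous_on UNIV (witness_dist Q) \<and>
            (\<exists>c>0. \<forall>y. \<bar>witness_dist Q y - distP P y\<bar> \<le> c * distP P y))"
proof
  assume H: "continuous_on UNIV (witness_dist Q) \<and>
            (\<exists>c>0. \<forall>y. \<bar>witness_dist Q y - distP P y\<bar> \<le> c * distP P y)"
  then have cf: "continuous_on UNIV (witness_dist Q)" by blast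
  from H obtain c where c: "c > 0" "\<forall>y. \<bar>witness_dist Q y - distP P y\<bar> \<le> c * distP P y" by blast
  from assms(3) obtain x0 where x0: "witness_dist Q x0 \<noteq> distP P x0" by blast
  have Pne: "P \<noteq> {}" using assms(2) by blast
  have "distP P x0 \<in> (\<lambda>p. norm (x0 - p)) ` P"
    unfolding distP_def using assms(1) Pne by (intro Min_in) auto
  then obtain a where a: "a \<in> P" "norm (x0 - a) = distP P x0" by force
  have amin: "norm (x0 - a) \<le> norm (x0 - q)" if "q \<in> P" for q
    using a(2) that assms(1) unfolding distP_def by (metis (no_types, lifting) Min_le finite_imageI image_eqI)
  have f0: "witness_dist Q p = 0" if "p \<in> P" for p
  proof -
    have "distP P p = 0" unfolding distP_def using that assms(1)
      by (intro Min_eqI) auto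
    moreover have "witness_dist Q p \<ge> 0" by (simp add: witness_dist_def)
    ultimately show ?thesis using c(2)[rule_format, of p] by simp
  qed
  show False
  proof (cases "P - {a} = {}")
    case True
    then have "Q x0 = a" using assms(2) a(1) by blast
    then show False using x0 a(2) by (simp add: witness_dist_def)
  next
    case False
    define y where "y t = a + t *\<^sub>R (x0 - a)" for t :: real
    define m where "m z = Min ((\<lambda>q. norm (z - q)) ` (P - {a})) - norm (z - a)" for z
    define D where "D z = witness_dist Q z - norm (z - a)" for z
    have fin: "finite (P - {a})" using assms(1) by simp
    have mpos: "m (y t) > 0" if "0 \<le> t" "t < 1" for t
    proof -
      have all: "\<forall>v\<in>(\<lambda>q. norm (y t - q)) ` (P - {a}). norm (y t - a) < v"
      proof
        fix v assume "v \<in> (\<lambda>q. norm (y t - q)) ` (P - {a})"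
        then obtain q where q: "q \<in> P" "q \<noteq> a" "v = norm (y t - q)" by blast
        show "norm (y t - a) < v" unfolding q(3) y_def
          by (rule strict_near[OF amin[OF q(1)] q(2) that])
      qed
      have ne: "(\<lambda>q. norm (y t - q)) ` (P - {a}) \<noteq> {}" using False by blast
      have "norm (y t - a) < Min ((\<lambda>q. norm (y t - q)) ` (P - {a}))"
        using Min_gr_iff[OF finite_imageI[OF fin] ne] all by blast
      then show ?thesis by (simp add: m_def)
    qed
    have Dm: "D z \<ge> m z" if "D z \<noteq> 0" for z
    proof -
      have "Q z \<noteq> a" using that by (auto simp: D_def witness_dist_def)
      then have "Q z \<in> P - {a}" using assms(2) by blast
      then have "Min ((\<lambda>q. norm (z - q)) ` (P - {a})) \<le> norm (z - Q z)"
        using fin by (intro Min_le) auto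
      then show ?thesis by (simp add: D_def m_def witness_dist_def)
    qed
    have cy: "continuous_on UNIV y" unfolding y_def by (intro continuous_intros)
    have cD: "continuous_on UNIV D" unfolding D_def
      by (intro continuous_on_diff cf continuous_on_norm continuous_on_id continuous_on_const)
    have cm: "continuous_on UNIV m" unfolding m_def
      by (intro continuous_on_diff cont_Min_fam[OF fin False] continuous_on_norm continuous_on_id continuous_on_const)
    have cDy: "continuous_on UNIV (\<lambda>t. D (y t))"
      using continuous_on_compose2[OF cD cy] by simp
    have cmy: "continuous_on UNIV (\<lambda>t. m (y t))"
      using continuous_on_compose2[OF cm cy] by simp
    have D0: "D (y 0) = 0" using f0[OF a(1)] by (simp add: y_def D_def)
    have Dz: "D (y t) = 0" if t: "0 \<le> t" "t < 1" for t
    proof (rule ccontr)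
      assume nz: "D (y t) \<noteq> 0"
      define phi where "phi s = D (y s) - m (y s) / 2" for s
      have p0: "phi 0 \<le> 0" using D0 mpos[of 0] by (simp add: phi_def)
      have pt: "0 \<le> phi t" using Dm[OF nz] mpos[OF t] by (simp add: phi_def)
      have "continuous_on UNIV phi" unfolding phi_def
        by (intro continuous_on_diff continuous_on_divide cDy cmy continuous_on_const) auto
      then have cph: "continuous_on {0..t} phi" by (rule continuous_on_subset) simp
      obtain s where s: "0 \<le> s" "s \<le> t" "phi s = 0"
        using IVT'[of phi 0 0 t, OF p0 pt _ cph] t by auto
      then have ms: "m (y s) > 0" using mpos t by simp
      then have "D (y s) = m (y s) / 2" using s by (simp add: phi_def)
      then have "D (y s) \<noteq> 0" using ms by simp
      from Dm[OF this] have "m (y s) / 2 \<ge> m (y s)" using \<open>D (y s) = m (y s) / 2\<close> by simp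
      then show False using ms by simp
    qed
    define ts where "ts n = 1 - inverse (real (Suc n))" for n
    have tsl: "ts \<longlonglongrightarrow> 1"
      unfolding ts_def using tendsto_diff[OF tendsto_const LIMSEQ_inverse_real_of_nat, of 1] by simp
    have "(\<lambda>n. D (y (ts n))) \<longlonglongrightarrow> D (y 1)"
      by (rule continuous_on_tendsto_compose[OF cDy tsl]) auto
    moreover have "(\<lambda>n. D (y (ts n))) = (\<lambda>n. 0)"
    proof
      fix n
      have "0 \<le> ts n" "ts n < 1" unfolding ts_def by (auto simp: field_simps)
      then show "D (y (ts n)) = 0" by (rule Dz)
    qed
    ultimately have "D (y 1) = 0" using LIMSEQ_unique[of _ "D (y 1)" 0] by simp
    then have "witness_dist Q x0 = norm (x0 - a)" by (simp add: D_def y_def)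
    then show False using x0 a(2) by simp
  qed
qed

end
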